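(* Let $\varepsilon>0$, $\mu\in\mathcal P(\Omega^n)$ and let $\vec V$ be a partition of $[n]$. If $\mu$ fails to be $\varepsilon$-regular with respect to $\vec V$, then there is a partition $\vec W$ of $[n]$ refining $\vec V$ such that $\#\vec W\le2\#\vec V$ and $\mathrm{ind}_\mu(\vec W)\le\mathrm{ind}_\mu(\vec V)-\varepsilon^4/(4|\Omega|^3)$.
   Context: $\Omega$ is a finite nonempty set, $\mathcal P(\Omega^n)$ the set of probability measures on $\Omega^n$, $\|\cdot\|_{TV}$ total variation. For $\sigma\in\Omega^n$, nonempty $S\subset[n]$ and $\omega\in\Omega$ let $\sigma[\omega|S]=|\sigma^{-1}(\omega)\cap S|/|S|$ and $\sigma[\omega|x]=\mathbf 1\{\sigma(x)=\omega\}$; $\langle X(\boldsymbol\sigma)\rangle_\mu=\sum_\sigma\mu(\sigma)X(\sigma)$. For a partition $\vec V=(V_1,\dots,V_k)$ of $[n]$ (size $\#\vec V=k$), $\mathrm{ind}_\mu(\vec V)=\frac1{|\Omega|n}\sum_{\omega}\sum_{j}\sum_{x\in V_j}\langle(\boldsymbol\sigma[\omega|x]-\boldsymbol\sigma[\omega|V_j])^2\rangle_\mu$. $\mu$ is $\varepsilon$-regular on $U\subset[n]$ if for every $S\subset U$ with $|S|\ge\varepsilon|U|$, $\langle\|\boldsymbol\sigma[\cdot|S]-\boldsymbol\sigma[\cdot|U]\|_{TV}\rangle_\mu<\varepsilon$; $\mu$ is $\varepsilon$-regular with respect to $\vec V$ if there is $J\subset[\#\vec V]$ with $\sum_{i\notin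 J}|V_i|<\varepsilon n$ such that $\mu$ is $\varepsilon$-regular on $V_i$ for every $i\in J$. $\vec W$ refines $\vec V$ if each class of $\vec W$ lies in a class of $\vec V$. *)

theory Defs
  imports Complex_Main "HOL-Library.FuncSet"
begin

text \<open>Configurations: \<sigma> \<in> \<Omega>^[n], represented as extensional functions on [n] = {1..n}.
  The spin set \<Omega> is a finite type 'a (automatically nonempty).\<close>

definition configs :: "nat \<Rightarrow> (nat \<Rightarrow> 'a) set" where
  "configs n = ({1..n} \<rightarrow>\<^sub>E (UNIV :: 'a set))"

definition is_prob :: "nat \<Rightarrow> ((nat \<Rightarrow> 'a::finite) \<Rightarrow> real) \<Rightarrow> bool" where
  "is_prob n \<mu> \<longleftrightarrow> (\<forall>\<sigma>\<in>configs n. \<mu> \<sigma> \<ge> 0) \<and> (\<Sum>\<sigma>\<in>configs n. \<mu> \<sigma>) = 1"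

definition expect :: "nat \<Rightarrow> ((nat \<Rightarrow> 'a::finite) \<Rightarrow> real) \<Rightarrow> ((nat \<Rightarrow> 'a) \<Rightarrow> real) \<Rightarrow> real" where
  "expect n \<mu> X = (\<Sum>\<sigma>\<in>configs n. \<mu> \<sigma> * X \<sigma>)"

definition frac :: "(nat \<Rightarrow> 'a) \<Rightarrow> 'a \<Rightarrow> nat set \<Rightarrow> real" where
  "frac \<sigma> \<omega> S = real (card {x\<in>S. \<sigma> x = \<omega>}) / real (card S)"

definition ind1 :: "(nat \<Rightarrow> 'a) \<Rightarrow> 'a \<Rightarrow> nat \<Rightarrow> real" where
  "ind1 \<sigma> \<omega> x = (if \<sigma> x = \<omega> then 1 else 0)"

definition tv :: "('a::finite \<Rightarrow> real) \<Rightarrow> ('a \<Rightarrow> real) \<Rightarrow> real" where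
  "tv p q = (1/2) * (\<Sum>\<omega>\<in>UNIV. \<bar>p \<omega> - q \<omega>\<bar>)"

definition is_partition :: "nat \<Rightarrow> nat set list \<Rightarrow> bool" where
  "is_partition n Vs \<longleftrightarrow>
     (\<forall>i<length Vs. Vs ! i \<noteq> {}) \<and>
     (\<forall>i<length Vs. \<forall>j<length Vs. i \<noteq> j \<longrightarrow> Vs ! i \<inter> Vs ! j = {}) \<and>
     \<Union> (set Vs) = {1..n}"

definition refines :: "nat set list \<Rightarrow> nat set list \<Rightarrow> bool" where
  "refines Ws Vs \<longleftrightarrow> (\<forall>W\<in>set Ws. \<exists>V\<in>set Vs. W \<subseteq> V)"

definition ind :: "nat \<Rightarrow> ((nat \<Rightarrow> 'a::finite) \<Rightarrow> real) \<Rightarrow> nat set list \<Rightarrow> real" where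
  "ind n \<mu> Vs = 1 / (real (card (UNIV::'a set)) * real n) *
     (\<Sum>\<omega>\<in>(UNIV::'a set). \<Sum>j<length Vs. \<Sum>x\<in>Vs ! j.
        expect n \<mu> (\<lambda>\<sigma>. (ind1 \<sigma> \<omega> x - frac \<sigma> \<omega> (Vs ! j))\<^sup>2))"

definition regular_on :: "nat \<Rightarrow> real \<Rightarrow> ((nat \<Rightarrow> 'a::finite) \<Rightarrow> real) \<Rightarrow> nat set \<Rightarrow> bool" where
  "regular_on n \<epsilon> \<mu> U \<longleftrightarrow>
     (\<forall>S\<subseteq>U. real (card S) \<ge> \<epsilon> * real (card U) \<longrightarrow>
        expect n \<mu> (\<lambda>\<sigma>. tv (\<lambda>\<omega>. frac \<sigma> \<omega> S) (\<lambda>\<omega>. frac \<sigma> \<omega> U)) < \<epsilon>)"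

definition regular_wrt :: "nat \<Rightarrow> real \<Rightarrow> ((nat \<Rightarrow> 'a::finite) \<Rightarrow> real) \<Rightarrow> nat set list \<Rightarrow> bool" where
  "regular_wrt n \<epsilon> \<mu> Vs \<longleftrightarrow>
     (\<exists>J\<subseteq>{..<length Vs}.
        (\<Sum>i\<in>{..<length Vs} - J. real (card (Vs ! i))) < \<epsilon> * real n \<and>
        (\<forall>i\<in>J. regular_on n \<epsilon> \<mu> (Vs ! i)))"

end

theory Submission imports Defs "HOL-Analysis.Convex" begin

lemma var_decomp:
  fixes f :: "nat \<Rightarrow> real"
  assumes "finite A" "A \<noteq> {}"
  shows "(\<Sum>x\<in>A. (f x - c)\<^sup>2) = (\<Sum>x\<in>A. (f x - sum f A / card A)\<^sup>2) + card A * (sum f A / card A - c)\<^sup>2"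
proof -
  define m where "m = sum f A / card A"
  have cA: "real (card A) > 0" using assms by auto
  have s0: "(\<Sum>x\<in>A. f x - m) = 0"
    using cA by (simp add: sum_subtractf m_def)
  have "(\<Sum>x\<in>A. (f x - c)\<^sup>2) = (\<Sum>x\<in>A. (f x - m)\<^sup>2 + 2 * (m - c) * (f x - m) + (m - c)\<^sup>2)"
    by (intro sum.cong refl) (simp add: power2_eq_square algebra_simps)
  also have "\<dots> = (\<Sum>x\<in>A. (f x - m)\<^sup>2) + 2 * (m - c) * (\<Sum>x\<in>A. f x - m) + card A * (m - c)\<^sup>2"
    by (simp add: sum.distrib sum_distrib_left)
  finally show ?thesis using s0 by (simp add: m_def)
qed

lemma frac_sum: "finite A \<Longrightarrow> frac \<sigma> \<omega> A = (\<Sum>x\<in>A. ind1 \<sigma> \<omega> x) / card A"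
  unfolding frac_def ind1_def by (simp add: sum.If_cases Int_def)

lemma weighted_cs:
  fixes w t :: "'b \<Rightarrow> real"
  assumes "\<And>i. i \<in> I \<Longrightarrow> w i \<ge> 0"
  shows "(\<Sum>i\<in>I. w i * t i)\<^sup>2 \<le> (\<Sum>i\<in>I. w i) * (\<Sum>i\<in>I. w i * (t i)\<^sup>2)"
proof -
  have "(\<Sum>i\<in>I. (sqrt (w i) * t i) * sqrt (w i))\<^sup>2 \<le> (\<Sum>i\<in>I. (sqrt (w i) * t i)\<^sup>2) * (\<Sum>i\<in>I. (sqrt (w i))\<^sup>2)"
    by (rule Cauchy_Schwarz_ineq_sum)
  moreover have "(\<Sum>i\<in>I. (sqrt (w i) * t i) * sqrt (w i)) = (\<Sum>i\<in>I. w i * t i)"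
    using assms by (intro sum.cong refl) (simp add: algebra_simps)
  moreover have "(\<Sum>i\<in>I. (sqrt (w i) * t i)\<^sup>2) = (\<Sum>i\<in>I. w i * (t i)\<^sup>2)"
    using assms by (intro sum.cong refl) (simp add: power_mult_distrib)
  moreover have "(\<Sum>i\<in>I. (sqrt (w i))\<^sup>2) = (\<Sum>i\<in>I. w i)"
    using assms by (intro sum.cong refl) simp
  ultimately show ?thesis by (simp add: mult.commute)
qed

lemma expect_sq:
  assumes "is_prob n \<mu>"
  shows "(expect n \<mu> t)\<^sup>2 \<le> expect n \<mu> (\<lambda>\<sigma>. (t \<sigma>)\<^sup>2)"
  using weighted_cs[of "configs n" \<mu> t] assms unfolding is_prob_def expect_def by auto

lemma expect_mono:
  assumes "is_prob n \<mu>" "\<And>\<sigma>. f \<sigma> \<le> g \<sigma>"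
  shows "expect n \<mu> f \<le> expect n \<mu> g"
  using assms unfolding is_prob_def expect_def by (auto intro!: sum_mono mult_left_mono)

lemma expect_diff: "expect n \<mu> (\<lambda>\<sigma>. f \<sigma> - g \<sigma>) = expect n \<mu> f - expect n \<mu> g"
  unfolding expect_def by (simp add: right_diff_distrib sum_subtractf)

lemma expect_cmult: "expect n \<mu> (\<lambda>\<sigma>. c * f \<sigma>) = c * expect n \<mu> f"
  unfolding expect_def by (simp add: sum_distrib_left algebra_simps)

lemma expect_sum: "expect n \<mu> (\<lambda>\<sigma>. \<Sum>i\<in>I. f i \<sigma>) = (\<Sum>i\<in>I. expect n \<mu> (f i))"
  unfolding expect_def by (simp add: sum_distrib_left sum.swap[of _ I])

definition Q :: "(nat \<Rightarrow> 'a::finite) \<Rightarrow> nat set \<Rightarrow> real" where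
  "Q \<sigma> W = (\<Sum>\<omega>\<in>UNIV. \<Sum>x\<in>W. (ind1 \<sigma> \<omega> x - frac \<sigma> \<omega> W)\<^sup>2)"

lemma split_omega:
  assumes "finite V" "S \<subseteq> V" "S \<noteq> {}" "V - S \<noteq> {}"
  shows "(\<Sum>x\<in>V. (ind1 \<sigma> \<omega> x - frac \<sigma> \<omega> V)\<^sup>2) - (\<Sum>x\<in>S. (ind1 \<sigma> \<omega> x - frac \<sigma> \<omega> S)\<^sup>2)
     - (\<Sum>x\<in>V-S. (ind1 \<sigma> \<omega> x - frac \<sigma> \<omega> (V-S))\<^sup>2) \<ge> card S * (frac \<sigma> \<omega> S - frac \<sigma> \<omega> V)\<^sup>2"
proof -
  have fS: "finite S" and fT: "finite (V-S)" using assms finite_subset by auto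
  have "(\<Sum>x\<in>V. (ind1 \<sigma> \<omega> x - frac \<sigma> \<omega> V)\<^sup>2) = (\<Sum>x\<in>S. (ind1 \<sigma> \<omega> x - frac \<sigma> \<omega> V)\<^sup>2) + (\<Sum>x\<in>V-S. (ind1 \<sigma> \<omega> x - frac \<sigma> \<omega> V)\<^sup>2)"
    by (subst sum.subset_diff[OF assms(2,1)]) simp
  also have "(\<Sum>x\<in>S. (ind1 \<sigma> \<omega> x - frac \<sigma> \<omega> V)\<^sup>2) = (\<Sum>x\<in>S. (ind1 \<sigma> \<omega> x - frac \<sigma> \<omega> S)\<^sup>2) + card S * (frac \<sigma> \<omega> S - frac \<sigma> \<omega> V)\<^sup>2"
    using var_decomp[OF fS assms(3), of "ind1 \<sigma> \<omega>" "frac \<sigma> \<omega> V"] unfolding frac_sum[OF fS, symmetric] .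
  also have "(\<Sum>x\<in>V-S. (ind1 \<sigma> \<omega> x - frac \<sigma> \<omega> V)\<^sup>2) = (\<Sum>x\<in>V-S. (ind1 \<sigma> \<omega> x - frac \<sigma> \<omega> (V-S))\<^sup>2) + card (V-S) * (frac \<sigma> \<omega> (V-S) - frac \<sigma> \<omega> V)\<^sup>2"
    using var_decomp[OF fT assms(4), of "ind1 \<sigma> \<omega>" "frac \<sigma> \<omega> V"] unfolding frac_sum[OF fT, symmetric] .
  finally show ?thesis by (simp add: sum_nonneg)
qed

lemma split_Q:
  fixes \<sigma> :: "nat \<Rightarrow> 'a::finite"
  assumes "finite V" "S \<subseteq> V" "S \<noteq> {}" "V - S \<noteq> {}"
  shows "Q \<sigma> V - Q \<sigma> S - Q \<sigma> (V-S) \<ge> card S * 4 * (tv (\<lambda>\<omega>. frac \<sigma> \<omega> S) (\<lambda>\<omega>. frac \<sigma> \<omega> V))\<^sup>2 / card (UNIV::'a set)"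
proof -
  define d where "d \<omega> = frac \<sigma> \<omega> S - frac \<sigma> \<omega> V" for \<omega>
  have c: "real (card (UNIV::'a set)) > 0" by (simp add: finite_UNIV_card_ge_0)
  have "Q \<sigma> V - Q \<sigma> S - Q \<sigma> (V-S) = (\<Sum>\<omega>\<in>UNIV. (\<Sum>x\<in>V. (ind1 \<sigma> \<omega> x - frac \<sigma> \<omega> V)\<^sup>2) - (\<Sum>x\<in>S. (ind1 \<sigma> \<omega> x - frac \<sigma> \<omega> S)\<^sup>2)
     - (\<Sum>x\<in>V-S. (ind1 \<sigma> \<omega> x - frac \<sigma> \<omega> (V-S))\<^sup>2))"
    unfolding Q_def by (simp add: sum_subtractf)
  also have "\<dots> \<ge> (\<Sum>\<omega>\<in>UNIV. card S * (d \<omega>)\<^sup>2)"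
    unfolding d_def by (intro sum_mono split_omega assms)
  moreover have "(\<Sum>\<omega>\<in>UNIV. card S * (d \<omega>)\<^sup>2) = card S * (\<Sum>\<omega>\<in>UNIV. (d \<omega>)\<^sup>2)"
    by (simp add: sum_distrib_left)
  moreover have "(\<Sum>\<omega>\<in>UNIV. \<bar>d \<omega>\<bar>)\<^sup>2 \<le> (\<Sum>\<omega>\<in>UNIV. (d \<omega>)\<^sup>2) * card (UNIV::'a set)"
    using sum_squared_le_sum_of_squares[of "\<lambda>\<omega>. \<bar>d \<omega>\<bar>" UNIV] by simp
  moreover have "tv (\<lambda>\<omega>. frac \<sigma> \<omega> S) (\<lambda>\<omega>. frac \<sigma> \<omega> V) = (\<Sum>\<omega>\<in>UNIV. \<bar>d \<omega>\<bar>) / 2"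
    unfolding tv_def d_def by simp
  ultimately have q1: "Q \<sigma> V - Q \<sigma> S - Q \<sigma> (V-S) \<ge> card S * (\<Sum>\<omega>\<in>UNIV. (d \<omega>)\<^sup>2)"
    and q2: "(\<Sum>\<omega>\<in>UNIV. \<bar>d \<omega>\<bar>)\<^sup>2 / card (UNIV::'a set) \<le> (\<Sum>\<omega>\<in>UNIV. (d \<omega>)\<^sup>2)"
    and q3: "tv (\<lambda>\<omega>. frac \<sigma> \<omega> S) (\<lambda>\<omega>. frac \<sigma> \<omega> V) = (\<Sum>\<omega>\<in>UNIV. \<bar>d \<omega>\<bar>) / 2"
    using c by (simp_all add: divide_le_eq)
  have q4: "card S * ((\<Sum>\<omega>\<in>UNIV. \<bar>d \<omega>\<bar>)\<^sup>2 / card (UNIV::'a set)) \<le> card S * (\<Sum>\<omega>\<in>UNIV. (d \<omega>)\<^sup>2)"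
    by (rule mult_left_mono[OF q2]) simp
  have q5: "4 * (tv (\<lambda>\<omega>. frac \<sigma> \<omega> S) (\<lambda>\<omega>. frac \<sigma> \<omega> V))\<^sup>2 = (\<Sum>\<omega>\<in>UNIV. \<bar>d \<omega>\<bar>)\<^sup>2"
    unfolding q3 by (simp add: power_divide)
  have "card S * 4 * (tv (\<lambda>\<omega>. frac \<sigma> \<omega> S) (\<lambda>\<omega>. frac \<sigma> \<omega> V))\<^sup>2 / card (UNIV::'a set) = card S * ((\<Sum>\<omega>\<in>UNIV. \<bar>d \<omega>\<bar>)\<^sup>2 / card (UNIV::'a set))"
    by (simp only: q5[symmetric] mult.assoc times_divide_eq_right)
  then show ?thesis using q1 q4 by linarith
qed


lemma ind_Q: "ind n \<mu> Ws = 1 / (real (card (UNIV::'a set)) * real n) *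
   (\<Sum>j<length Ws. expect n \<mu> (\<lambda>\<sigma>. Q \<sigma> (Ws ! j)))"
  for \<mu> :: "(nat \<Rightarrow> 'a::finite) \<Rightarrow> real"
  unfolding ind_def Q_def expect_sum by (simp add: sum.swap[of _ UNIV])

lemma expect_const0: "expect n \<mu> (\<lambda>\<sigma>. 0) = 0"
  unfolding expect_def by simp

lemma irregular_split:
  fixes \<mu> :: "(nat \<Rightarrow> 'a::finite) \<Rightarrow> real"
  assumes P: "is_prob n \<mu>" and fV: "finite V" and ne: "V \<noteq> {}" and e: "\<epsilon> > 0"
    and nr: "\<not> regular_on n \<epsilon> \<mu> V"
  shows "\<exists>S. S \<subseteq> V \<and> S \<noteq> {} \<and> V - S \<noteq> {} \<and>
     expect n \<mu> (\<lambda>\<sigma>. Q \<sigma> V) - expect n \<mu> (\<lambda>\<sigma>. Q \<sigma> S) - expect n \<mu> (\<lambda>\<sigma>. Q \<sigma> (V - S))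
       \<ge> 4 * \<epsilon> ^ 3 * card V / card (UNIV::'a set)"
proof -
  define c where "c = real (card (UNIV::'a set))"
  have c: "c > 0" unfolding c_def by (simp add: finite_UNIV_card_ge_0)
  define tvS where "tvS S \<sigma> = tv (\<lambda>\<omega>. frac \<sigma> \<omega> S) (\<lambda>\<omega>. frac \<sigma> \<omega> V)" for S and \<sigma> :: "nat \<Rightarrow> 'a"
  from nr obtain S where SV: "S \<subseteq> V" and cS: "real (card S) \<ge> \<epsilon> * real (card V)"
    and eS: "expect n \<mu> (tvS S) \<ge> \<epsilon>"
    unfolding regular_on_def tvS_def not_all not_imp not_less by blast
  have "card V > 0" using fV ne by auto
  then have "\<epsilon> * real (card V) > 0" using e by simp
  then have "real (card S) > 0" using cS by linarith
  then have Sne: "S \<noteq> {}" by auto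
  have "S \<noteq> V"
  proof
    assume "S = V"
    then have "tvS S = (\<lambda>\<sigma>. 0)" unfolding tvS_def tv_def by (auto simp: fun_eq_iff)
    then show False using eS e expect_const0[of n \<mu>] by simp
  qed
  then have Tne: "V - S \<noteq> {}" using SV by auto
  have "expect n \<mu> (\<lambda>\<sigma>. Q \<sigma> V) - expect n \<mu> (\<lambda>\<sigma>. Q \<sigma> S) - expect n \<mu> (\<lambda>\<sigma>. Q \<sigma> (V - S))
     = expect n \<mu> (\<lambda>\<sigma>. Q \<sigma> V - Q \<sigma> S - Q \<sigma> (V - S))"
    by (simp add: expect_diff)
  also have "\<dots> \<ge> expect n \<mu> (\<lambda>\<sigma>. (card S * 4 / c) * (tvS S \<sigma>)\<^sup>2)"
    by (rule expect_mono[OF P]) (use split_Q[OF fV SV Sne Tne] in \<open>simp add: tvS_def c_def\<close>)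
  moreover have "expect n \<mu> (\<lambda>\<sigma>. (card S * 4 / c) * (tvS S \<sigma>)\<^sup>2) = (card S * 4 / c) * expect n \<mu> (\<lambda>\<sigma>. (tvS S \<sigma>)\<^sup>2)"
    by (rule expect_cmult)
  moreover have "expect n \<mu> (\<lambda>\<sigma>. (tvS S \<sigma>)\<^sup>2) \<ge> \<epsilon>\<^sup>2"
  proof -
    have "\<epsilon>\<^sup>2 \<le> (expect n \<mu> (tvS S))\<^sup>2" using eS e by (intro power_mono) auto
    also have "\<dots> \<le> expect n \<mu> (\<lambda>\<sigma>. (tvS S \<sigma>)\<^sup>2)" by (rule expect_sq[OF P])
    finally show ?thesis .
  qed
  ultimately have f1: "expect n \<mu> (\<lambda>\<sigma>. Q \<sigma> V) - expect n \<mu> (\<lambda>\<sigma>. Q \<sigma> S) - expect n \<mu> (\<lambda>\<sigma>. Q \<sigma> (V - S))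
      \<ge> (card S * 4 / c) * \<epsilon>\<^sup>2"
  proof -
    assume a1: "expect n \<mu> (\<lambda>\<sigma>. Q \<sigma> V - Q \<sigma> S - Q \<sigma> (V - S)) \<ge> expect n \<mu> (\<lambda>\<sigma>. (card S * 4 / c) * (tvS S \<sigma>)\<^sup>2)"
      and a2: "expect n \<mu> (\<lambda>\<sigma>. (card S * 4 / c) * (tvS S \<sigma>)\<^sup>2) = (card S * 4 / c) * expect n \<mu> (\<lambda>\<sigma>. (tvS S \<sigma>)\<^sup>2)"
      and a3: "expect n \<mu> (\<lambda>\<sigma>. (tvS S \<sigma>)\<^sup>2) \<ge> \<epsilon>\<^sup>2"
    have "(card S * 4 / c) * \<epsilon>\<^sup>2 \<le> (card S * 4 / c) * expect n \<mu> (\<lambda>\<sigma>. (tvS S \<sigma>)\<^sup>2)"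
      using c by (intro mult_left_mono[OF a3]) auto
    then show ?thesis using a1 a2 by (simp add: expect_diff)
  qed
  have f2: "(card S * 4 / c) * \<epsilon>\<^sup>2 \<ge> (\<epsilon> * card V * 4 / c) * \<epsilon>\<^sup>2"
    using cS c by (intro mult_right_mono divide_right_mono) auto
  have f3: "(\<epsilon> * card V * 4 / c) * \<epsilon>\<^sup>2 = 4 * \<epsilon> ^ 3 * card V / c"
    by (simp add: power2_eq_square power3_eq_cube)
  have "expect n \<mu> (\<lambda>\<sigma>. Q \<sigma> V) - expect n \<mu> (\<lambda>\<sigma>. Q \<sigma> S) - expect n \<mu> (\<lambda>\<sigma>. Q \<sigma> (V - S))
      \<ge> 4 * \<epsilon> ^ 3 * card V / c" using f1 f2 f3 by linarith
  then show ?thesis using SV Sne Tne unfolding c_def by blast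
qed


lemma sum_nth_list: "(\<Sum>j<length xs. F (xs ! j)) = sum_list (map F xs)"
  by (simp add: sum_list_sum_nth atLeast0LessThan)

theorem lemma2p7:
  fixes \<epsilon> :: real and n :: nat and \<mu> :: "(nat \<Rightarrow> 'a::finite) \<Rightarrow> real" and Vs :: "nat set list"
  assumes "\<epsilon> > 0" and "n \<ge> 1"
    and "is_prob n \<mu>"
    and "is_partition n Vs"
    and "\<not> regular_wrt n \<epsilon> \<mu> Vs"
  shows "\<exists>Ws. is_partition n Ws \<and> refines Ws Vs \<and> length Ws \<le> 2 * length Vs \<and>
           ind n \<mu> Ws \<le> ind n \<mu> Vs - \<epsilon> ^ 4 / (4 * real (card (UNIV::'a set)) ^ 3)"
proof -
  note e = assms(1) and P = assms(3) and part = assms(4)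
  define k where "k = length Vs"
  define c where "c = real (card (UNIV::'a set))"
  have c: "c \<ge> 1" unfolding c_def using finite_UNIV_card_ge_0[where 'a='a] by simp
  define Irr where "Irr = {i\<in>{..<k}. \<not> regular_on n \<epsilon> \<mu> (Vs ! i)}"
  have Irrk: "Irr \<subseteq> {..<k}" unfolding Irr_def by auto
  have ne: "\<And>i. i < k \<Longrightarrow> Vs ! i \<noteq> {}" using part unfolding is_partition_def k_def by auto
  have disj: "\<And>i j. i < k \<Longrightarrow> j < k \<Longrightarrow> i \<noteq> j \<Longrightarrow> Vs ! i \<inter> Vs ! j = {}"
    using part unfolding is_partition_def k_def by auto
  have un: "\<Union> (set Vs) = {1..n}" using part unfolding is_partition_def by auto
  have sub: "\<And>i. i < k \<Longrightarrow> Vs ! i \<subseteq> {1..n}" using un k_def by auto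
  have fin: "\<And>i. i < k \<Longrightarrow> finite (Vs ! i)" using sub finite_subset by blast
  have big: "(\<Sum>i\<in>Irr. real (card (Vs ! i))) \<ge> \<epsilon> * real n"
  proof -
    have "{..<k} - ({..<k} - Irr) = Irr" using Irrk by auto
    moreover have "\<forall>i\<in>{..<k} - Irr. regular_on n \<epsilon> \<mu> (Vs ! i)" unfolding Irr_def by auto
    moreover have "{..<k} - Irr \<subseteq> {..<k}" by auto
    ultimately have "\<not> (\<Sum>i\<in>{..<k} - ({..<k} - Irr). real (card (Vs ! i))) < \<epsilon> * real n"
      using assms(5) unfolding regular_wrt_def k_def[symmetric] by blast
    then show ?thesis using \<open>{..<k} - ({..<k} - Irr) = Irr\<close> by simp
  qed
  define F where "F W = expect n \<mu> (\<lambda>\<sigma>. Q \<sigma> W)" for W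
  have "\<forall>i\<in>Irr. \<exists>S. S \<subseteq> Vs ! i \<and> S \<noteq> {} \<and> Vs ! i - S \<noteq> {} \<and>
     F (Vs ! i) - F S - F (Vs ! i - S) \<ge> 4 * \<epsilon> ^ 3 * card (Vs ! i) / c"
    unfolding F_def c_def
    using irregular_split[OF P fin ne e] Irrk unfolding Irr_def by auto
  from bchoice[OF this] obtain S where S0: "\<forall>i\<in>Irr. S i \<subseteq> Vs ! i \<and> S i \<noteq> {} \<and> Vs ! i - S i \<noteq> {} \<and>
     F (Vs ! i) - F (S i) - F (Vs ! i - S i) \<ge> 4 * \<epsilon> ^ 3 * card (Vs ! i) / c"
    by blast
  have S: "\<And>i. i \<in> Irr \<Longrightarrow> S i \<subseteq> Vs ! i \<and> S i \<noteq> {} \<and> Vs ! i - S i \<noteq> {} \<and>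
     F (Vs ! i) - F (S i) - F (Vs ! i - S i) \<ge> 4 * \<epsilon> ^ 3 * card (Vs ! i) / c"
    using S0 by blast
  define A where "A i = (if i \<in> Irr then S i else Vs ! i)" for i
  define B where "B i = Vs ! i - S i" for i
  define L where "L = filter (\<lambda>i. i \<in> Irr) [0..<k]"
  define Ws where "Ws = map A [0..<k] @ map B L"
  have setL: "set L = Irr" unfolding L_def using Irrk by auto
  have distL: "distinct L" unfolding L_def by simp
  have lenL: "length L \<le> k" unfolding L_def using length_filter_le[of _ "[0..<k]"] by simp
  have AV: "\<And>i. i < k \<Longrightarrow> A i \<subseteq> Vs ! i" unfolding A_def using S by auto
  have BV: "\<And>i. i \<in> Irr \<Longrightarrow> B i \<subseteq> Vs ! i" unfolding B_def by auto
  have Ane: "\<And>i. i < k \<Longrightarrow> A i \<noteq> {}" unfolding A_def using S ne by auto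
  have Bne: "\<And>i. i \<in> Irr \<Longrightarrow> B i \<noteq> {}" unfolding B_def using S by auto
  have ABd: "\<And>i. i \<in> Irr \<Longrightarrow> A i \<inter> B i = {}" unfolding A_def B_def by auto
  have Ws_nth: "\<And>j. j < length Ws \<Longrightarrow> Ws ! j = (if j < k then A j else B (L ! (j - k)))"
    unfolding Ws_def by (simp add: nth_append)
  have lenWs: "length Ws = k + length L" unfolding Ws_def by simp
  have Lin: "\<And>m. m < length L \<Longrightarrow> L ! m \<in> Irr \<and> L ! m < k" using setL Irrk nth_mem by blast
  have WV: "\<And>W. W \<in> set Ws \<Longrightarrow> \<exists>i. i < k \<and> W \<subseteq> Vs ! i"
  proof -
    fix W assume "W \<in> set Ws"
    then have "W \<in> A ` {..<k} \<union> B ` Irr" unfolding Ws_def using setL by auto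
    then show "\<exists>i. i < k \<and> W \<subseteq> Vs ! i" using AV BV Irrk by blast
  qed
  have is_part: "is_partition n Ws"
    unfolding is_partition_def
  proof (intro conjI allI impI)
    fix j assume j: "j < length Ws"
    show "Ws ! j \<noteq> {}"
    proof (cases "j < k")
      case True then show ?thesis using Ws_nth[OF j] Ane by simp
    next
      case False then have "j - k < length L" using j lenWs by simp
      then show ?thesis using Ws_nth[OF j] False Bne Lin by simp
    qed
  next
    fix j j' assume j: "j < length Ws" and j': "j' < length Ws" and jj: "j \<noteq> j'"
    show "Ws ! j \<inter> Ws ! j' = {}"
    proof (cases "j < k")
      case True
      note jk = True
      show ?thesis
      proof (cases "j' < k")
        case True
        have "Ws ! j = A j" "Ws ! j' = A j'" using Ws_nth[OF j] Ws_nth[OF j'] jk True by simp_all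
        then show ?thesis using AV[OF jk] AV[OF True] disj[OF jk True jj] by blast
      next
        case False
        define i' where "i' = L ! (j' - k)"
        have i': "i' \<in> Irr" "i' < k" using Lin[of "j' - k"] j' False lenWs unfolding i'_def by auto
        have W': "Ws ! j' = B i'" using Ws_nth[OF j'] False i'_def by simp
        show ?thesis
        proof (cases "j = i'")
          case True then show ?thesis using jk W' Ws_nth[OF j] ABd i' by simp
        next
          case False
          then show ?thesis using jk W' Ws_nth[OF j] AV[OF jk] BV[OF i'(1)] disj[OF jk i'(2)] by auto
        qed
      qed
    next
      case False
      note jk = False
      define i where "i = L ! (j - k)"
      have i: "i \<in> Irr" "i < k" using Lin[of "j - k"] j False lenWs unfolding i_def by auto
      have W: "Ws ! j = B i" using Ws_nth[OF j] False i_def by simp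
      show ?thesis
      proof (cases "j' < k")
        case True
        then have jk': "j' < k" .
        show ?thesis
        proof (cases "j' = i")
          case True then show ?thesis using jk' W Ws_nth[OF j'] ABd i by auto
        next
          case False
          then show ?thesis using jk' W Ws_nth[OF j'] AV[OF jk'] BV[OF i(1)] disj[OF jk' i(2)] by auto
        qed
      next
        case False
        define i' where "i' = L ! (j' - k)"
        have i': "i' \<in> Irr" "i' < k" using Lin[of "j' - k"] j' False lenWs unfolding i'_def by auto
        have W': "Ws ! j' = B i'" using Ws_nth[OF j'] False i'_def by simp
        have "i \<noteq> i'" unfolding i_def i'_def using distL jj jk False j j' lenWs
          by (simp add: nth_eq_iff_index_eq)
        then show ?thesis using W W' BV[OF i(1)] BV[OF i'(1)] disj[OF i(2) i'(2)] by auto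
      qed
    qed
  next
    show "\<Union> (set Ws) = {1..n}"
    proof
      show "\<Union> (set Ws) \<subseteq> {1..n}"
      proof
        fix x assume "x \<in> \<Union> (set Ws)"
        then obtain W where W: "W \<in> set Ws" "x \<in> W" by blast
        then obtain i where "i < k" "W \<subseteq> Vs ! i" using WV by blast
        then show "x \<in> {1..n}" using sub W by blast
      qed
    next
      show "{1..n} \<subseteq> \<Union> (set Ws)"
      proof
        fix x assume "x \<in> {1..n}"
        then obtain V where V: "V \<in> set Vs" "x \<in> V" using un by blast
        then obtain i where i: "i < k" "x \<in> Vs ! i" unfolding k_def in_set_conv_nth by blast
        show "x \<in> \<Union> (set Ws)"
        proof (cases "i \<in> Irr \<and> x \<notin> S i")
          case True
          then have "B i \<in> set Ws" unfolding Ws_def using setL by auto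
          then show ?thesis using True i unfolding B_def by auto
        next
          case False
          then have "x \<in> A i" using i unfolding A_def by auto
          moreover have "A i \<in> set Ws" unfolding Ws_def using i by auto
          ultimately show ?thesis by auto
        qed
      qed
    qed
  qed
  have ref: "refines Ws Vs"
    unfolding refines_def
  proof
    fix W assume "W \<in> set Ws"
    then have "W \<in> A ` {..<k} \<union> B ` Irr" unfolding Ws_def using setL by auto
    then obtain i where "i < k \<and> W \<subseteq> Vs ! i" using AV BV Irrk by blast
    then show "\<exists>V\<in>set Vs. W \<subseteq> V" unfolding k_def by (meson nth_mem)
  qed
  have len: "length Ws \<le> 2 * length Vs" using lenWs lenL k_def by simp
  define C where "C = 1 / (c * real n)"
  have indW: "ind n \<mu> Ws = C * ((\<Sum>i<k. F (A i)) + (\<Sum>i\<in>Irr. F (B i)))"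
  proof -
    have "(\<Sum>j<length Ws. F (Ws ! j)) = sum_list (map F Ws)" by (rule sum_nth_list)
    also have "\<dots> = sum_list (map (F \<circ> A) [0..<k]) + sum_list (map (F \<circ> B) L)"
      unfolding Ws_def by simp
    also have "\<dots> = (\<Sum>i<k. F (A i)) + (\<Sum>i\<in>Irr. F (B i))"
      using distL setL by (simp add: sum_list_distinct_conv_sum_set atLeast0LessThan)
    finally show ?thesis unfolding ind_Q C_def c_def F_def by simp
  qed
  have indV: "ind n \<mu> Vs = C * (\<Sum>i<k. F (Vs ! i))"
    unfolding ind_Q C_def c_def F_def k_def by simp
  define D where "D i = F (Vs ! i) - F (A i) - (if i \<in> Irr then F (B i) else 0)" for i
  have sB: "(\<Sum>i\<in>Irr. F (B i)) = (\<Sum>i<k. if i \<in> Irr then F (B i) else 0)"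
    using sum.inter_restrict[of "{..<k}" "\<lambda>i. F (B i)" Irr] Irrk by (simp add: Int_absorb1)
  have sD: "(\<Sum>i<k. F (Vs ! i)) - ((\<Sum>i<k. F (A i)) + (\<Sum>i\<in>Irr. F (B i))) = (\<Sum>i<k. D i)"
    unfolding sB D_def by (simp add: sum_subtractf sum.distrib)
  have Dge: "\<And>i. i < k \<Longrightarrow> D i \<ge> (if i \<in> Irr then 4 * \<epsilon> ^ 3 * card (Vs ! i) / c else 0)"
    unfolding D_def A_def B_def using S by auto
  have "(\<Sum>i<k. D i) \<ge> (\<Sum>i<k. if i \<in> Irr then 4 * \<epsilon> ^ 3 * card (Vs ! i) / c else 0)"
    by (intro sum_mono Dge) auto
  also have "(\<Sum>i<k. if i \<in> Irr then 4 * \<epsilon> ^ 3 * card (Vs ! i) / c else 0) = (\<Sum>i\<in>Irr. 4 * \<epsilon> ^ 3 * card (Vs ! i) / c)"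
    using sum.inter_restrict[of "{..<k}" "\<lambda>i. 4 * \<epsilon> ^ 3 * card (Vs ! i) / c" Irr] Irrk by (simp add: Int_absorb1)
  also have "\<dots> = (4 * \<epsilon> ^ 3 / c) * (\<Sum>i\<in>Irr. real (card (Vs ! i)))"
    by (simp add: sum_distrib_left)
  finally have sumD: "(\<Sum>i<k. D i) \<ge> (4 * \<epsilon> ^ 3 / c) * (\<epsilon> * real n)"
    using mult_left_mono[OF big, of "4 * \<epsilon> ^ 3 / c"] c e by simp
  have npos: "real n > 0" using assms(2) by simp
  have Cpos: "C > 0" unfolding C_def using c npos by simp
  have "ind n \<mu> Vs - ind n \<mu> Ws = C * (\<Sum>i<k. D i)"
    unfolding indW indV sD[symmetric] by (simp add: right_diff_distrib)
  also have "\<dots> \<ge> C * ((4 * \<epsilon> ^ 3 / c) * (\<epsilon> * real n))"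
    using sumD Cpos by (intro mult_left_mono) auto
  moreover have "C * ((4 * \<epsilon> ^ 3 / c) * (\<epsilon> * real n)) = 4 * \<epsilon> ^ 4 / c ^ 2"
    unfolding C_def using npos c by (simp add: field_simps power2_eq_square power3_eq_cube power4_eq_xxxx)
  moreover have "4 * \<epsilon> ^ 4 / c ^ 2 \<ge> \<epsilon> ^ 4 / (4 * c ^ 3)"
  proof -
    have q: "1 / (4 * c) \<le> 4" using c by (simp add: field_simps)
    have "\<epsilon> ^ 4 / (4 * c ^ 3) = (\<epsilon> ^ 4 / c ^ 2) * (1 / (4 * c))" using c by (simp add: field_simps power2_eq_square power3_eq_cube)
    also have "(\<epsilon> ^ 4 / c ^ 2) * (1 / (4 * c)) \<le> (\<epsilon> ^ 4 / c ^ 2) * 4" using e by (intro mult_left_mono[OF q]) simp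
    finally show ?thesis by simp
  qed
  ultimately have "ind n \<mu> Ws \<le> ind n \<mu> Vs - \<epsilon> ^ 4 / (4 * c ^ 3)" by linarith
  then show ?thesis using is_part ref len unfolding c_def by blast
qed

end
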